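(* Assume the setting in the context (evolution systems $U_n$, $n\ge0$, satisfying $(\overline{\mathrm P}_1)$ and $(\overline{\mathrm P}_2)$), let $T>0$, let $\mathcal F\subset X$ be relatively compact, and let $(f_n)$ be a sequence in $L^\infty([0,T],X)$ such that $f_n(t)\in\mathcal F$ for a.e. $t\in[0,T]$ and every $n$. Then $$\int_0^t\big[U_n(t,s)-U_0(t,s)\big]f_n(s)\,ds\to0\quad\text{in }X^\alpha$$ as $n\to+\infty$, uniformly with respect to $t\in[0,T]$.
   Context: $X$ is a Banach space, $\alpha\in(0,1)$, and $X^\alpha\subset X$ is a Banach space with norm $\|\cdot\|_\alpha$ continuously and densely embedded in $X$. For each $n\ge0$, $\{U_n(t,s)\}_{t\ge s\ge0}$ is the evolution system generated by a family $\{A_n(t)\}_{t\ge0}$ of linear operators satisfying the standard parabolic conditions (sectorial operators with common domain, uniform resolvent bounds, Hölder continuity in $t$), with $U_n(t,s)X\subset X^\alpha$ for $t>s$. $(\overline{\mathrm P}_1)$: there is $K>0$ with $\|U_n(t,s)\|_{\mathcal L(X^\alpha,X^\alpha)}\le K$ and $\|U_n(t,s)\|_{\mathcal L(X,X^\alpha)}\le K(1+(t-s)^{-\alpha})$ for all $t>s\ge0$ and all $n\ge0$. $(\overline{\mathrm P}_2)$: for every $\bar u\in X^\alpha$ and $T'>0$, $U_n(t,s)\bar u\to U_0(t,s)\bar u$ in $X^\alpha$ uniformly in $t\in[0,T']$, $s\in[0,t]$. *)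

theory Defs
  imports "HOL-Analysis.Analysis"
begin

definition evolution_system :: "(real \<Rightarrow> real \<Rightarrow> 'a::real_normed_vector \<Rightarrow> 'a) \<Rightarrow> bool" where
  "evolution_system U \<longleftrightarrow>
     (\<forall>t s. 0 \<le> s \<and> s \<le> t \<longrightarrow> bounded_linear (U t s)) \<and>
     (\<forall>t. 0 \<le> t \<longrightarrow> U t t = id) \<and>
     (\<forall>t r s. 0 \<le> s \<and> s \<le> r \<and> r \<le> t \<longrightarrow> U t r \<circ> U r s = U t s) \<and>
     (\<forall>x. continuous_on {(t, s). 0 \<le> s \<and> s \<le> t} (\<lambda>(t, s). U t s x))"

end

theory Submission
  imports Defs
begin

hide_const (open) Polynomial.content

lemma riemann_diff_bound:
  fixes f g :: "real \<Rightarrow> 'b::banach"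
  assumes D: "D tagged_division_of {a..b}"
    and le: "\<And>x. x \<in> {a..b} \<Longrightarrow> norm (f x - g x) \<le> h x"
  shows "norm ((\<Sum>(x,K)\<in>D. content K *\<^sub>R f x) - (\<Sum>(x,K)\<in>D. content K *\<^sub>R g x))
          \<le> (\<Sum>(x,K)\<in>D. content K *\<^sub>R h x)"
proof -
  have "(\<Sum>(x,K)\<in>D. content K *\<^sub>R f x) - (\<Sum>(x,K)\<in>D. content K *\<^sub>R g x)
      = (\<Sum>(x,K)\<in>D. content K *\<^sub>R (f x - g x))"
    by (simp add: sum_subtractf[symmetric] split_def scaleR_diff_right)
  also have "norm \<dots> \<le> (\<Sum>(x,K)\<in>D. content K *\<^sub>R h x)"
  proof (rule sum_norm_le)
    fix p assume p: "p \<in> D"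
    obtain x K where pe: "p = (x,K)" by (cases p)
    have x: "x \<in> {a..b}" using tagged_division_ofD(2,3)[OF D] p pe by fastforce
    have "norm (content K *\<^sub>R (f x - g x)) = content K * norm (f x - g x)"
      by simp
    also have "\<dots> \<le> content K * h x"
      using le[OF x] by (intro mult_left_mono) auto
    finally show "norm (case p of (x, K) \<Rightarrow> content K *\<^sub>R (f x - g x)) \<le> (case p of (x, K) \<Rightarrow> content K *\<^sub>R h x)"
      using pe by simp
  qed
  finally show ?thesis .
qed

lemma integrable_approx_dom:
  fixes f :: "real \<Rightarrow> 'b::banach"
  assumes approx: "\<And>e. e > 0 \<Longrightarrow> \<exists>g h. g integrable_on {a..b} \<and> h integrable_on {a..b} \<and>
        (\<forall>x\<in>{a..b}. norm (f x - g x) \<le> h x) \<and> integral {a..b} h < e"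
  shows "f integrable_on {a..b}"
proof -
  have "f integrable_on cbox a b"
    unfolding integrable_Cauchy
  proof (intro allI impI)
    fix e :: real assume e: "e > 0"
    obtain g h where g: "g integrable_on {a..b}" and h: "h integrable_on {a..b}"
      and le: "\<forall>x\<in>{a..b}. norm (f x - g x) \<le> h x" and hi: "integral {a..b} h < e/8"
      using approx[of "e/8"] e by auto
    have "(g has_integral integral {a..b} g) (cbox a b)" using g by (simp add: has_integral_integral)
    then obtain \<gamma>1 where \<gamma>1: "gauge \<gamma>1" and
      G1: "\<And>D. D tagged_division_of (cbox a b) \<Longrightarrow> \<gamma>1 fine D \<Longrightarrow>
           norm ((\<Sum>(x,K)\<in>D. content K *\<^sub>R g x) - integral {a..b} g) < e/8"
      unfolding has_integral using e by (metis (no_types, lifting) divide_pos_pos zero_less_numeral)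
    have "(h has_integral integral {a..b} h) (cbox a b)" using h by (simp add: has_integral_integral)
    then obtain \<gamma>2 where \<gamma>2: "gauge \<gamma>2" and
      G2: "\<And>D. D tagged_division_of (cbox a b) \<Longrightarrow> \<gamma>2 fine D \<Longrightarrow>
           norm ((\<Sum>(x,K)\<in>D. content K *\<^sub>R h x) - integral {a..b} h) < e/8"
      unfolding has_integral using e by (metis (no_types, lifting) divide_pos_pos zero_less_numeral)
    have one: "norm ((\<Sum>(x,K)\<in>D. content K *\<^sub>R f x) - integral {a..b} g) < e/2"
      if D: "D tagged_division_of (cbox a b)" "\<gamma>1 fine D" "\<gamma>2 fine D" for D
    proof -
      have D': "D tagged_division_of {a..b}" using D by simp
      have "norm ((\<Sum>(x,K)\<in>D. content K *\<^sub>R f x) - (\<Sum>(x,K)\<in>D. content K *\<^sub>R g x))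
          \<le> (\<Sum>(x,K)\<in>D. content K *\<^sub>R h x)"
        using riemann_diff_bound[OF D'] le by blast
      moreover have "(\<Sum>(x,K)\<in>D. content K *\<^sub>R h x) < integral {a..b} h + e/8"
        using G2[OF D(1,3)] unfolding real_norm_def by linarith
      ultimately have "norm ((\<Sum>(x,K)\<in>D. content K *\<^sub>R f x) - (\<Sum>(x,K)\<in>D. content K *\<^sub>R g x)) < e/4"
        using hi by linarith
      from norm_diff_triangle_less[OF this G1[OF D(1,2)]] show ?thesis using e by linarith
    qed
    show "\<exists>\<gamma>. gauge \<gamma> \<and> (\<forall>D1 D2. D1 tagged_division_of cbox a b \<and> \<gamma> fine D1 \<and>
            D2 tagged_division_of cbox a b \<and> \<gamma> fine D2 \<longrightarrow>
            norm ((\<Sum>(x,K)\<in>D1. content K *\<^sub>R f x) - (\<Sum>(x,K)\<in>D2. content K *\<^sub>R f x)) < e)"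
    proof (intro exI conjI allI impI)
      show "gauge (\<lambda>x. \<gamma>1 x \<inter> \<gamma>2 x)" using \<gamma>1 \<gamma>2 by (rule gauge_Int)
      fix D1 D2 assume H: "D1 tagged_division_of cbox a b \<and> (\<lambda>x. \<gamma>1 x \<inter> \<gamma>2 x) fine D1 \<and>
            D2 tagged_division_of cbox a b \<and> (\<lambda>x. \<gamma>1 x \<inter> \<gamma>2 x) fine D2"
      then have a1: "norm ((\<Sum>(x,K)\<in>D1. content K *\<^sub>R f x) - integral {a..b} g) < e/2"
        and a2: "norm ((\<Sum>(x,K)\<in>D2. content K *\<^sub>R f x) - integral {a..b} g) < e/2"
        using one by (auto simp: fine_Int)
      have a2': "norm (integral {a..b} g - (\<Sum>(x,K)\<in>D2. content K *\<^sub>R f x)) < e/2"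
        using a2 by (simp add: norm_minus_commute)
      show "norm ((\<Sum>(x,K)\<in>D1. content K *\<^sub>R f x) - (\<Sum>(x,K)\<in>D2. content K *\<^sub>R f x)) < e"
        using norm_diff_triangle_less[OF a1 a2'] by simp
    qed
  qed
  then show ?thesis by simp
qed

lemma open_lebesgue: "open (A::real set) \<Longrightarrow> A \<in> sets lebesgue"
  by (metis borel_open sets_completionI_sets sets_lborel)

lemma Icc_lebesgue: "{a..b::real} \<in> sets lebesgue"
  by (metis borel_closed closed_atLeastAtMost sets_completionI_sets sets_lborel)

lemma foldr_pick:
  "(\<exists>z\<in>set zs. P z s) \<Longrightarrow> \<exists>z\<in>set zs. P z s \<and> foldr (\<lambda>z r. if P z s then c z s else r) zs 0 = c z s"
  by (induction zs) auto

lemma foldr_integrable: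
  fixes c :: "'c \<Rightarrow> real \<Rightarrow> 'b::banach"
  assumes meas: "\<And>z. z \<in> set zs \<Longrightarrow> {s\<in>{a..b}. P z s} \<in> sets lebesgue"
    and ind: "\<And>z E. z \<in> set zs \<Longrightarrow> E \<in> sets lebesgue \<Longrightarrow> (\<lambda>s. indicator E s *\<^sub>R c z s) integrable_on {a..b}"
    and M: "M \<in> sets lebesgue"
  shows "(\<lambda>s. indicator M s *\<^sub>R foldr (\<lambda>z r. if P z s then c z s else r) zs 0) integrable_on {a..b}"
  using meas ind M
proof (induction zs arbitrary: M)
  case Nil
  show ?case by (simp add: integrable_0)
next
  case (Cons z zs)
  let ?A = "{s\<in>{a..b}. P z s}"
  have A: "?A \<in> sets lebesgue" using Cons.prems(1) by simp
  have MA: "M \<inter> ?A \<in> sets lebesgue" using Cons.prems(3) A by (rule sets.Int)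
  have 1: "(\<lambda>s. indicator (M \<inter> ?A) s *\<^sub>R c z s) integrable_on {a..b}"
    using Cons.prems(2)[OF _ MA] by simp
  have MA2: "M - ?A \<in> sets lebesgue" using Cons.prems(3) A by (rule sets.Diff)
  have m: "\<And>z. z \<in> set zs \<Longrightarrow> {s\<in>{a..b}. P z s} \<in> sets lebesgue" using Cons.prems(1) by simp
  have i: "\<And>z E. z \<in> set zs \<Longrightarrow> E \<in> sets lebesgue \<Longrightarrow> (\<lambda>s. indicator E s *\<^sub>R c z s) integrable_on {a..b}"
    using Cons.prems(2) by simp
  have 2: "(\<lambda>s. indicator (M - ?A) s *\<^sub>R foldr (\<lambda>z r. if P z s then c z s else r) zs 0) integrable_on {a..b}"
    by (rule Cons.IH[OF m i MA2])
  have "(\<lambda>s. indicator (M \<inter> ?A) s *\<^sub>R c z s + indicator (M - ?A) s *\<^sub>R foldr (\<lambda>z r. if P z s then c z s else r) zs 0) integrable_on {a..b}"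
    using integrable_add[OF 1 2] .
  then show ?case
  proof (rule integrable_eq)
    fix s assume s: "s \<in> {a..b}"
    show "indicator (M \<inter> ?A) s *\<^sub>R c z s + indicator (M - ?A) s *\<^sub>R foldr (\<lambda>z r. if P z s then c z s else r) zs 0
        = indicator M s *\<^sub>R foldr (\<lambda>z r. if P z s then c z s else r) (z # zs) 0"
      using s by (cases "s \<in> M"; cases "P z s") (simp_all add: indicator_def)
  qed
qed

lemma integrable_compact_meas:
  fixes g :: "real \<Rightarrow> 'b::banach"
  assumes C: "compact C" and gC: "\<And>s. s \<in> {a..b} \<Longrightarrow> g s \<in> C"
    and meas: "\<And>G. open G \<Longrightarrow> {s\<in>{a..b}. g s \<in> G} \<in> sets lebesgue"
  shows "g integrable_on {a..b}"
proof -
  have "g integrable_on cbox a b"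
  proof (rule integrable_uniform_limit)
    fix e :: real assume e: "e > 0"
    have "C \<subseteq> (\<Union>z\<in>C. ball z e)" using e by auto
    then obtain Z where Z: "Z \<subseteq> C" "finite Z" "C \<subseteq> (\<Union>z\<in>Z. ball z e)"
      using compactE_image[OF C, of C "\<lambda>z. ball z e"] by auto
    obtain zs where zs: "set zs = Z" using finite_list Z by blast
    let ?h = "\<lambda>s. foldr (\<lambda>z r. if g s \<in> ball z e then z else r) zs 0"
    have "(\<lambda>s. indicator UNIV s *\<^sub>R ?h s) integrable_on {a..b}"
    proof (rule foldr_integrable[where P="\<lambda>z s. g s \<in> ball z e" and c = "\<lambda>z s. z"])
      fix z assume "z \<in> set zs"
      show "{s\<in>{a..b}. g s \<in> ball z e} \<in> sets lebesgue" by (rule meas) simp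
    next
      fix z and E :: "real set" assume "E \<in> sets lebesgue"
      then have "E \<inter> {a..b} \<in> lmeasurable"
        by (intro bounded_set_imp_lmeasurable) (auto intro: bounded_subset[of "{a..b}"])
      then have "indicat_real E integrable_on {a..b}" by (simp add: integrable_on_indicator)
      then show "(\<lambda>s. indicator E s *\<^sub>R z) integrable_on {a..b}"
        by (rule integrable_on_scaleR_left)
    qed simp
    then have h: "?h integrable_on {a..b}" by simp
    show "\<exists>h. (\<forall>x\<in>cbox a b. norm (g x - h x) \<le> e) \<and> h integrable_on cbox a b"
    proof (intro exI conjI ballI)
      fix x assume "x \<in> cbox a b"
      then have "g x \<in> C" using gC by simp
      then have "\<exists>z\<in>set zs. g x \<in> ball z e" using Z zs by blast
      then obtain z where "z \<in> set zs" "g x \<in> ball z e" "?h x = z"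
        using foldr_pick[of zs "\<lambda>z s. g s \<in> ball z e" x "\<lambda>z s. z"] by auto
      then show "norm (g x - ?h x) \<le> e" by (simp add: dist_norm norm_minus_commute)
    next
      show "?h integrable_on cbox a b" using h by simp
    qed
  qed
  then show ?thesis by simp
qed

lemma integrable_indicator_cont:
  fixes c :: "real \<Rightarrow> 'b::banach"
  assumes E: "E \<in> sets lebesgue" and c: "continuous_on {a..b} c"
  shows "(\<lambda>s. indicator E s *\<^sub>R c s) integrable_on {a..b}"
proof (rule integrable_compact_meas[where C = "insert 0 (c ` {a..b})"])
  show "compact (insert 0 (c ` {a..b}))"
    using compact_continuous_image[OF c compact_Icc] by (rule compact_insert)
  show "indicator E s *\<^sub>R c s \<in> insert 0 (c ` {a..b})" if "s \<in> {a..b}" for s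
    using that by (cases "s \<in> E") (simp_all add: indicator_def)
  fix G :: "'b set" assume O: "open G"
  obtain A where A: "open A" "A \<inter> {a..b} = c -` G \<inter> {a..b}"
    using c O unfolding continuous_on_open_invariant by blast
  have A': "\<And>s. s \<in> {a..b} \<Longrightarrow> s \<in> A \<longleftrightarrow> c s \<in> G" using A(2) by blast
  have "{s\<in>{a..b}. indicator E s *\<^sub>R c s \<in> G} = (E \<inter> (A \<inter> {a..b})) \<union> (if 0 \<in> G then {a..b} - E else {})"
  proof (intro set_eqI)
    fix s show "s \<in> {s\<in>{a..b}. indicator E s *\<^sub>R c s \<in> G} \<longleftrightarrow> s \<in> (E \<inter> (A \<inter> {a..b})) \<union> (if 0 \<in> G then {a..b} - E else {})"
      using A'[of s] by (cases "s \<in> E"; cases "s \<in> {a..b}"; cases "0 \<in> G") (auto simp add: indicator_def)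
  qed
  also have "\<dots> \<in> sets lebesgue"
    using E open_lebesgue[OF A(1)] Icc_lebesgue[of a b] by (auto intro!: sets.Un sets.Int sets.Diff)
  finally show "{s\<in>{a..b}. indicator E s *\<^sub>R c s \<in> G} \<in> sets lebesgue" .
qed

lemma integrable_improper_dom:
  fixes f :: "real \<Rightarrow> 'b::banach"
  assumes ab: "a < b" and int: "\<And>c. a \<le> c \<Longrightarrow> c < b \<Longrightarrow> f integrable_on {a..c}"
    and h: "h integrable_on {a..b}" and le: "\<And>x. a \<le> x \<Longrightarrow> x < b \<Longrightarrow> norm (f x) \<le> h x"
  shows "f integrable_on {a..b}"
proof (rule integrable_approx_dom)
  fix e :: real assume e: "e > 0"
  have cont: "continuous_on {a..b} (\<lambda>x. integral {a..x} h)"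
    using h by (rule indefinite_integral_continuous_1)
  have bab: "b \<in> {a..b}" using ab by simp
  from cont[unfolded continuous_on_iff, rule_format, OF bab e] obtain d where d: "d > 0" and
    dH: "\<forall>x\<in>{a..b}. dist x b < d \<longrightarrow> dist (integral {a..x} h) (integral {a..b} h) < e"
    by blast
  define c where "c = max a (b - d/2)"
  have c: "a \<le> c" "c < b" using ab d by (auto simp: c_def)
  have "dist c b < d" using ab d by (auto simp: c_def dist_real_def)
  then have Hc: "dist (integral {a..c} h) (integral {a..b} h) < e" using dH c by simp
  have comb: "integral {a..c} h + integral {c..b} h = integral {a..b} h"
    using c h by (intro Henstock_Kurzweil_Integration.integral_combine) auto
  have "integral {c..b} h = integral {a..b} h - integral {a..c} h" using comb by (simp add: algebra_simps)
  then have hcb: "integral {c..b} h < e" using Hc unfolding dist_real_def by arith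
  have ac: "{a..c} \<inter> {a..b} = {a..c}" and cb: "{c..b} \<inter> {a..b} = {c..b}" using c by auto
  define g where "g x = (if x \<in> {a..c} then f x else 0)" for x
  define k0 where "k0 x = (if x \<in> {c..b} then h x else 0)" for x
  define k where "k x = (if x = b then norm (f b) else k0 x)" for x
  have g: "g integrable_on {a..b}"
    unfolding g_def integrable_restrict_Int ac by (rule int[OF c])
  have hcb_int: "h integrable_on {c..b}"
    by (rule integrable_subinterval_real[OF h]) (use c in auto)
  have k0: "k0 integrable_on {a..b}"
    unfolding k0_def integrable_restrict_Int cb by (rule hcb_int)
  have k: "k integrable_on {a..b}"
    by (rule integrable_spike[OF k0, of "{b}"]) (auto simp: k_def)
  have "integral {a..b} k = integral {a..b} k0"
    by (rule integral_spike[of "{b}"]) (auto simp: k_def)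
  also have "\<dots> = integral {c..b} h"
    unfolding k0_def Henstock_Kurzweil_Integration.integral_restrict_Int cb ..
  finally have ki: "integral {a..b} k < e" using hcb by simp
  have bnd: "norm (f x - g x) \<le> k x" if x: "x \<in> {a..b}" for x
  proof (cases "x = b")
    case True then show ?thesis using c by (simp add: g_def k_def)
  next
    case False
    then have xb: "x < b" using x by auto
    show ?thesis
    proof (cases "x \<le> c")
      case True
      then have "0 \<le> k x"
      proof -
        have "norm (f x) \<le> h x" using le[of x] x xb by simp
        then have "0 \<le> h x" using norm_ge_zero[of "f x"] by linarith
        then show ?thesis using xb by (simp add: k_def k0_def)
      qed
      then show ?thesis using True x by (simp add: g_def)
    next
      case False
      then show ?thesis using le[of x] x xb c by (auto simp: g_def k_def k0_def)
    qed
  qed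
  show "\<exists>g h. g integrable_on {a..b} \<and> h integrable_on {a..b} \<and>
        (\<forall>x\<in>{a..b}. norm (f x - g x) \<le> h x) \<and> integral {a..b} h < e"
    using g k bnd ki by blast
qed



lemma powr_rev_has_integral:
  fixes \<alpha> t :: real
  assumes "0 < \<alpha>" "\<alpha> < 1" "0 \<le> t"
  shows "((\<lambda>s. (t - s) powr (-\<alpha>)) has_integral (t powr (1 - \<alpha>) / (1 - \<alpha>))) {0..t}"
proof -
  have "((\<lambda>x. x powr (-\<alpha>)) has_integral (t powr (-\<alpha>+1) / (-\<alpha>+1))) (cbox 0 t)"
    using has_integral_powr_from_0[of "-\<alpha>" t] assms by simp
  from has_integral_affinity[OF this, of "-1" t]
  have "((\<lambda>x. (-x + t) powr (-\<alpha>)) has_integral (t powr (-\<alpha>+1) / (-\<alpha>+1))) ((\<lambda>x. -x + t) ` {0..t})"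
    by simp
  moreover have "(\<lambda>x. -x + t) ` {0..t} = {0..t}"
    by (auto simp: image_iff intro!: bexI[of _ "t - _"])
  ultimately show ?thesis by (simp add: algebra_simps)
qed

lemma bound_has_integral:
  fixes \<alpha> t A B :: real
  assumes "0 < \<alpha>" "\<alpha> < 1" "0 \<le> t"
  shows "((\<lambda>s. A * (1 + (t - s) powr (-\<alpha>)) + B) has_integral
           (A * (t + t powr (1 - \<alpha>) / (1 - \<alpha>)) + B * t)) {0..t}"
proof -
  have "((\<lambda>s. 1 + (t - s) powr (-\<alpha>)) has_integral (t + t powr (1 - \<alpha>) / (1 - \<alpha>))) {0..t}"
    using has_integral_add[OF has_integral_const_real[of 1 0 t] powr_rev_has_integral[OF assms]] assms
    by simp
  from has_integral_add[OF has_integral_mult_right[OF this, of A] has_integral_const_real[of B 0 t]]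
  show ?thesis using assms by (simp add: mult.commute)
qed

theorem lemma4p3:
  fixes i :: "'b::banach \<Rightarrow> 'a::banach"
    and U :: "nat \<Rightarrow> real \<Rightarrow> real \<Rightarrow> 'a \<Rightarrow> 'a"
    and V :: "nat \<Rightarrow> real \<Rightarrow> real \<Rightarrow> 'a \<Rightarrow> 'b"
    and \<alpha> K T :: real
    and F :: "'a set"
    and f :: "nat \<Rightarrow> real \<Rightarrow> 'a"
  assumes alpha: "0 < \<alpha>" "\<alpha> < 1"
    and emb: "bounded_linear i" "inj i" "closure (range i) = UNIV"
    and evol: "\<And>n. evolution_system (U n)"
    and smooth: "\<And>n t s x. 0 \<le> s \<Longrightarrow> s < t \<Longrightarrow> i (V n t s x) = U n t s x"
    and K: "K > 0"
    and P1a: "\<And>n t s y. 0 \<le> s \<Longrightarrow> s < t \<Longrightarrow> norm (V n t s (i y)) \<le> K * norm y"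
    and P1b: "\<And>n t s x. 0 \<le> s \<Longrightarrow> s < t \<Longrightarrow>
                 norm (V n t s x) \<le> K * (1 + (t - s) powr (- \<alpha>)) * norm x"
    and P2: "\<And>y T'. T' > 0 \<Longrightarrow>
               \<forall>\<epsilon>>0. \<exists>N. \<forall>n\<ge>N. \<forall>t s. 0 \<le> s \<and> s < t \<and> t \<le> T' \<longrightarrow>
                  norm (V n t s (i y) - V 0 t s (i y)) < \<epsilon>"
    and T: "T > 0"
    and F: "compact (closure F)"
    and f_Linf: "\<And>n. f n \<in> borel_measurable (restrict_space lebesgue {0..T})"
    and f_F: "\<And>n. AE s in lebesgue. s \<in> {0..T} \<longrightarrow> f n s \<in> F"
  shows "(\<forall>n. \<forall>t\<in>{0..T}.
            (\<lambda>s. V n t s (f n s) - V 0 t s (f n s)) integrable_on {0..t})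
       \<and> uniform_limit {0..T}
           (\<lambda>n t. integral {0..t} (\<lambda>s. V n t s (f n s) - V 0 t s (f n s)))
           (\<lambda>t. 0) sequentially"
proof -
  have Ubl: "\<And>n t s. 0 \<le> s \<Longrightarrow> s \<le> t \<Longrightarrow> bounded_linear (U n t s)"
    using evol unfolding evolution_system_def by blast
  have Ucoc: "U n t r (U n r s x) = U n t s x" if "0 \<le> s" "s \<le> r" "r \<le> t" for n t r s x
  proof -
    have "U n t r \<circ> U n r s = U n t s" using evol[of n] that unfolding evolution_system_def by blast
    then have "(U n t r \<circ> U n r s) x = U n t s x" by simp
    then show ?thesis by simp
  qed
  have Ucont: "\<And>n x. continuous_on {(t, s). 0 \<le> s \<and> s \<le> t} (\<lambda>(t, s). U n t s x)"
    using evol unfolding evolution_system_def by blast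
  interpret il: bounded_linear i by (rule emb(1))
  have Vadd: "V n t s (x + y) = V n t s x + V n t s y" if "0 \<le> s" "s < t" for n t s x y
  proof (rule injD[OF emb(2)])
    interpret u: bounded_linear "U n t s" using Ubl that by simp
    show "i (V n t s (x + y)) = i (V n t s x + V n t s y)"
      using that by (simp add: smooth il.add u.add)
  qed
  have Vscale: "V n t s (r *\<^sub>R x) = r *\<^sub>R V n t s x" if "0 \<le> s" "s < t" for n t s r x
  proof (rule injD[OF emb(2)])
    interpret u: bounded_linear "U n t s" using Ubl that by simp
    show "i (V n t s (r *\<^sub>R x)) = i (r *\<^sub>R V n t s x)"
      using that by (simp add: smooth il.scaleR u.scaleR)
  qed
  have Vbl: "bounded_linear (V n t s)" if "0 \<le> s" "s < t" for n t s
    by (rule bounded_linear_intro[where K = "K * (1 + (t - s) powr (- \<alpha>))"])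
       (use that Vadd Vscale P1b in \<open>auto simp: mult.commute\<close>)
  have Vdiff: "V n t s (x - y) = V n t s x - V n t s y" if "0 \<le> s" "s < t" for n t s x y
    using linear_diff[OF bounded_linear.linear[OF Vbl[OF that]]] .
  have Vcoc: "V n t s x = V n t r (U n r s x)" if "0 \<le> s" "s \<le> r" "r < t" for n t r s x
  proof (rule injD[OF emb(2)])
    show "i (V n t s x) = i (V n t r (U n r s x))"
      using that by (simp add: smooth Ucoc)
  qed
  have Vcont: "continuous_on {0..r} (\<lambda>s. V n t s x)" if "0 \<le> r" "r < t" for n t r x
  proof -
    have c0: "continuous_on {0..r} (\<lambda>s. (r, s))" by (intro continuous_intros)
    have "continuous_on {0..r} (\<lambda>s. (\<lambda>(t, s). U n t s x) (r, s))"
      by (rule continuous_on_compose2[OF Ucont[of n x] c0]) auto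
    then have c1: "continuous_on {0..r} (\<lambda>s. U n r s x)" by simp
    have "continuous_on {0..r} (\<lambda>s. V n t r (U n r s x))"
      using bounded_linear.continuous_on[OF Vbl[OF that] c1] .
    then show ?thesis
      by (rule continuous_on_cong[THEN iffD1, rotated 2]) (use that Vcoc in auto)
  qed
  define K0 where "K0 = insert 0 (closure F)"
  have K0c: "compact K0" using F by (simp add: K0_def)
  obtain M where M: "M > 0" "\<And>x. x \<in> K0 \<Longrightarrow> norm x \<le> M"
    using compact_imp_bounded[OF K0c] unfolding bounded_pos by blast
  define g where "g n s = (if s \<in> f n -` K0 then f n s else 0)" for n s
  have gK: "g n s \<in> K0" for n s by (simp add: g_def K0_def)
  have K0b: "K0 \<in> sets borel" using K0c by (simp add: borel_closed compact_imp_closed)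
  have gmeas: "g n \<in> borel_measurable (restrict_space lebesgue {0..T})" for n
    unfolding g_def
  proof (rule measurable_If_set[OF f_Linf])
    show "f n -` K0 \<inter> space (restrict_space lebesgue {0..T}) \<in> sets (restrict_space lebesgue {0..T})"
      by (rule measurable_sets[OF f_Linf K0b])
  qed simp
  have gsets: "{s\<in>{0..c}. g n s \<in> G} \<in> sets lebesgue" if "c \<le> T" "open G" for n c G
  proof -
    have "g n -` G \<inter> space (restrict_space lebesgue {0..T}) \<in> sets (restrict_space lebesgue {0..T})"
      by (rule measurable_sets[OF gmeas]) (simp add: borel_open that)
    then have "g n -` G \<inter> {0..T} \<in> sets lebesgue"
      by (simp add: sets_restrict_space_iff Icc_lebesgue space_restrict_space)
    then have "{0..c} \<inter> (g n -` G \<inter> {0..T}) \<in> sets lebesgue"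
      by (rule sets.Int[OF Icc_lebesgue])
    moreover have "{0..c} \<inter> (g n -` G \<inter> {0..T}) = {s\<in>{0..c}. g n s \<in> G}" using that by auto
    ultimately show ?thesis by simp
  qed
  have gae: "\<exists>N. negligible N \<and> (\<forall>s\<in>{0..T} - N. g n s = f n s)" for n
  proof -
    from f_F[of n] obtain N where N: "{x \<in> space lebesgue. \<not> (x \<in> {0..T} \<longrightarrow> f n x \<in> F)} \<subseteq> N"
      "emeasure lebesgue N = 0" "N \<in> sets lebesgue"
      by (rule AE_E)
    have "negligible N" unfolding negligible_iff_null_sets using N(2,3) by auto
    moreover have "g n s = f n s" if "s \<in> {0..T} - N" for s
    proof -
      have "f n s \<in> F" using that N(1) by auto
      then show ?thesis by (auto simp: g_def K0_def intro: closure_subset[THEN subsetD])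
    qed
    ultimately show ?thesis by blast
  qed
  have IntV: "(\<lambda>s. V m t s (g n s)) integrable_on {0..t}" if t: "0 < t" "t \<le> T" for m n t
  proof (rule integrable_improper_dom[where h = "\<lambda>s. K * (1 + (t - s) powr (- \<alpha>)) * M"])
    show "0 < t" by (rule t(1))
    show "norm (V m t s (g n s)) \<le> K * (1 + (t - s) powr (- \<alpha>)) * M" if "0 \<le> s" "s < t" for s
    proof -
      have "norm (V m t s (g n s)) \<le> K * (1 + (t - s) powr (- \<alpha>)) * norm (g n s)"
        by (rule P1b[OF that])
      also have "\<dots> \<le> K * (1 + (t - s) powr (- \<alpha>)) * M"
        using M(2)[OF gK] K by (intro mult_left_mono) (auto intro: add_nonneg_nonneg)
      finally show ?thesis .
    qed
    have "((\<lambda>s. (K * M) * (1 + (t - s) powr (-\<alpha>)) + 0) has_integral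
           ((K * M) * (t + t powr (1 - \<alpha>) / (1 - \<alpha>)) + 0 * t)) {0..t}"
      using bound_has_integral[OF alpha, of t "K * M" 0] t by simp
    then show "(\<lambda>s. K * (1 + (t - s) powr (- \<alpha>)) * M) integrable_on {0..t}"
      by (simp add: integrable_on_def algebra_simps) (metis (no_types, lifting) mult.commute mult.left_commute)
  next
    fix c assume c: "0 \<le> c" "c < t"
    have "(\<lambda>s. V m t s (g n s)) integrable_on cbox 0 c"
    proof (rule integrable_uniform_limit)
      fix e :: real assume e: "e > 0"
      define B where "B = K * (1 + (t - c) powr (- \<alpha>))"
      have B: "B > 0" using K by (simp add: B_def add_pos_nonneg)
      define \<delta> where "\<delta> = e / B"
      have \<delta>: "\<delta> > 0" using e B by (simp add: \<delta>_def)
      have "K0 \<subseteq> (\<Union>z\<in>K0. ball z \<delta>)" using \<delta> by auto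
      then obtain Z where Z: "Z \<subseteq> K0" "finite Z" "K0 \<subseteq> (\<Union>z\<in>Z. ball z \<delta>)"
        using compactE_image[OF K0c, of K0 "\<lambda>z. ball z \<delta>"] by auto
      obtain zs where zs: "set zs = Z" using finite_list Z by blast
      let ?h = "\<lambda>s. foldr (\<lambda>z r. if g n s \<in> ball z \<delta> then V m t s z else r) zs 0"
      have "(\<lambda>s. indicator UNIV s *\<^sub>R ?h s) integrable_on {0..c}"
      proof (rule foldr_integrable[where P="\<lambda>z s. g n s \<in> ball z \<delta>" and c = "\<lambda>z s. V m t s z"])
        fix z assume "z \<in> set zs"
        show "{s\<in>{0..c}. g n s \<in> ball z \<delta>} \<in> sets lebesgue"
          using c t by (intro gsets) auto
      next
        fix z and E :: "real set" assume "E \<in> sets lebesgue"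
        then show "(\<lambda>s. indicator E s *\<^sub>R V m t s z) integrable_on {0..c}"
          by (rule integrable_indicator_cont[OF _ Vcont[OF c]])
      qed simp
      then have h: "?h integrable_on {0..c}" by simp
      show "\<exists>h. (\<forall>x\<in>cbox 0 c. norm (V m t x (g n x) - h x) \<le> e) \<and> h integrable_on cbox 0 c"
      proof (intro exI conjI ballI)
        fix x assume x: "x \<in> cbox 0 c"
        have "\<exists>z\<in>set zs. g n x \<in> ball z \<delta>" using Z zs gK[of n x] by blast
        then obtain z where z: "z \<in> set zs" "g n x \<in> ball z \<delta>" "?h x = V m t x z"
          using foldr_pick[of zs "\<lambda>z s. g n s \<in> ball z \<delta>" x "\<lambda>z s. V m t s z"] by auto
        have x0: "0 \<le> x" "x < t" using x c by auto
        have pw: "(t - x) powr (- \<alpha>) \<le> (t - c) powr (- \<alpha>)"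
          using x c alpha by (intro powr_mono2') auto
        have "norm (V m t x (g n x) - ?h x) = norm (V m t x (g n x - z))"
          using z(3) Vdiff[OF x0] by simp
        also have "\<dots> \<le> K * (1 + (t - x) powr (- \<alpha>)) * norm (g n x - z)"
          by (rule P1b[OF x0])
        also have "\<dots> \<le> B * \<delta>"
          unfolding B_def using pw K z(2)
          by (intro mult_mono) (auto simp: dist_norm norm_minus_commute intro: add_nonneg_nonneg)
        also have "\<dots> = e" using B by (simp add: \<delta>_def)
        finally show "norm (V m t x (g n x) - ?h x) \<le> e" .
      next
        show "?h integrable_on cbox 0 c" using h by simp
      qed
    qed
    then show "(\<lambda>s. V m t s (g n s)) integrable_on {0..c}" by simp
  qed
  have int0: "integral {0..0} h = 0" for h :: "real \<Rightarrow> 'b"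
    by (metis integral_refl interval_cbox)
  have intpart: "\<forall>n. \<forall>t\<in>{0..T}. (\<lambda>s. V n t s (f n s) - V 0 t s (f n s)) integrable_on {0..t}"
  proof (intro allI ballI)
    fix n t assume t: "t \<in> {0..T}"
    show "(\<lambda>s. V n t s (f n s) - V 0 t s (f n s)) integrable_on {0..t}"
    proof (cases "t = 0")
      case True then show ?thesis by (metis integrable_on_refl interval_cbox)
    next
      case False
      then have t': "0 < t" "t \<le> T" using t by auto
      obtain N where N: "negligible N" "\<forall>s\<in>{0..T} - N. g n s = f n s" using gae by blast
      have "(\<lambda>s. V n t s (g n s) - V 0 t s (g n s)) integrable_on {0..t}"
        using integrable_diff[OF IntV[OF t', of n n] IntV[OF t', of 0 n]] .
      then show ?thesis
        by (rule integrable_spike[OF _ N(1)]) (use N(2) t' in auto)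
    qed
  qed
  have unif: "uniform_limit {0..T}
           (\<lambda>n t. integral {0..t} (\<lambda>s. V n t s (f n s) - V 0 t s (f n s)))
           (\<lambda>t. 0) sequentially"
    unfolding uniform_limit_iff
  proof (intro allI impI)
    fix e :: real assume e: "e > 0"
    define C0 where "C0 = T + T powr (1 - \<alpha>) / (1 - \<alpha>)"
    have C0: "C0 > 0" using T alpha by (simp add: C0_def add_pos_nonneg)
    define \<delta> where "\<delta> = e / (4 * K * C0)"
    have \<delta>: "\<delta> > 0" using e K C0 by (simp add: \<delta>_def)
    define \<eta> where "\<eta> = e / (4 * T)"
    have \<eta>: "\<eta> > 0" using e T by (simp add: \<eta>_def)
    have cov: "K0 \<subseteq> (\<Union>y\<in>UNIV. ball (i y) \<delta>)"
    proof
      fix x assume "x \<in> K0"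
      have "x \<in> closure (range i)" using emb(3) by simp
      then obtain z where "z \<in> range i" "dist z x < \<delta>" using closure_approachable \<delta> by blast
      then show "x \<in> (\<Union>y\<in>UNIV. ball (i y) \<delta>)" by auto
    qed
    then obtain Y where Y: "finite Y" "K0 \<subseteq> (\<Union>y\<in>Y. ball (i y) \<delta>)"
      using compactE_image[OF K0c, of UNIV "\<lambda>y. ball (i y) \<delta>"] by auto
    have ex: "\<forall>y\<in>Y. \<exists>N. \<forall>n\<ge>N. \<forall>t s. 0 \<le> s \<and> s < t \<and> t \<le> T \<longrightarrow> norm (V n t s (i y) - V 0 t s (i y)) < \<eta>"
      using P2[OF T] \<eta> by blast
    obtain Nf where Nf: "\<forall>y\<in>Y. \<forall>n\<ge>Nf y. \<forall>t s. 0 \<le> s \<and> s < t \<and> t \<le> T \<longrightarrow> norm (V n t s (i y) - V 0 t s (i y)) < \<eta>"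
      using bchoice[OF ex] by blast
    define N0 where "N0 = Max (insert 0 (Nf ` Y))"
    show "\<forall>\<^sub>F n in sequentially. \<forall>t\<in>{0..T}. dist (integral {0..t} (\<lambda>s. V n t s (f n s) - V 0 t s (f n s))) 0 < e"
      unfolding eventually_sequentially
    proof (intro exI[of _ N0] allI impI ballI)
      fix n t assume n: "N0 \<le> n" and t: "t \<in> {0..T}"
      have nY: "Nf y \<le> n" if "y \<in> Y" for y
        using Max_ge[of "insert 0 (Nf ` Y)" "Nf y"] Y(1) that n unfolding N0_def by auto
      show "dist (integral {0..t} (\<lambda>s. V n t s (f n s) - V 0 t s (f n s))) 0 < e"
      proof (cases "t = 0")
        case True then show ?thesis using e int0 by simp
      next
        case False
        then have t': "0 < t" "t \<le> T" using t by auto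
        obtain N where N: "negligible N" "\<forall>s\<in>{0..T} - N. g n s = f n s" using gae by blast
        define W where "W s = (if s = t then 0 else V n t s (g n s) - V 0 t s (g n s))" for s
        have Wint: "W integrable_on {0..t}"
          by (rule integrable_spike[OF integrable_diff[OF IntV[OF t', of n n] IntV[OF t', of 0 n]], of "{t}"]) (auto simp: W_def)
        have negNt: "negligible (N \<union> {t})" using N(1) by auto
        have eqi: "integral {0..t} (\<lambda>s. V n t s (f n s) - V 0 t s (f n s)) = integral {0..t} W"
          by (rule integral_spike[OF negNt]) (use N(2) t' in \<open>auto simp: W_def\<close>)
        define hb where "hb s = (2*K*\<delta>) * (1 + (t - s) powr (-\<alpha>)) + \<eta>" for s
        have hbI: "(hb has_integral ((2*K*\<delta>) * (t + t powr (1-\<alpha>)/(1-\<alpha>)) + \<eta> * t)) {0..t}"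
          unfolding hb_def by (rule bound_has_integral[OF alpha]) (use t' in simp)
        have bnd: "norm (W s) \<le> hb s" if s: "s \<in> {0..t}" for s
        proof (cases "s = t")
          case True
          have "0 \<le> hb s" unfolding hb_def using K \<delta> \<eta>
            by (intro add_nonneg_nonneg mult_nonneg_nonneg) auto
          then show ?thesis using True by (simp add: W_def)
        next
          case False
          then have s0: "0 \<le> s" "s < t" using s by auto
          define Q where "Q = K * (1 + (t - s) powr (-\<alpha>))"
          have Q: "0 \<le> Q" unfolding Q_def using K by (intro mult_nonneg_nonneg add_nonneg_nonneg) auto
          have "g n s \<in> K0" by (rule gK)
          then obtain y where y: "y \<in> Y" "g n s \<in> ball (i y) \<delta>" using Y(2) by blast
          have d: "norm (g n s - i y) \<le> \<delta>" using y(2) by (simp add: dist_norm norm_minus_commute)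
          have eqW: "W s = (V n t s (g n s - i y) - V 0 t s (g n s - i y)) + (V n t s (i y) - V 0 t s (i y))"
            using False by (simp add: W_def Vdiff[OF s0])
          have A1: "norm (V m t s (g n s - i y)) \<le> Q * \<delta>" for m
          proof -
            have "norm (V m t s (g n s - i y)) \<le> Q * norm (g n s - i y)"
              unfolding Q_def by (rule P1b[OF s0])
            also have "\<dots> \<le> Q * \<delta>" by (rule mult_left_mono[OF d Q])
            finally show ?thesis .
          qed
          have A3: "norm (V n t s (i y) - V 0 t s (i y)) < \<eta>"
            using Nf y(1) nY[OF y(1)] s0 t' by auto
          have "norm (W s) \<le> norm (V n t s (g n s - i y) - V 0 t s (g n s - i y)) + norm (V n t s (i y) - V 0 t s (i y))"
            unfolding eqW by (rule norm_triangle_ineq)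
          also have "\<dots> \<le> (norm (V n t s (g n s - i y)) + norm (V 0 t s (g n s - i y))) + \<eta>"
            using A3 norm_triangle_ineq4[of "V n t s (g n s - i y)" "V 0 t s (g n s - i y)"] by linarith
          also have "\<dots> \<le> (Q * \<delta> + Q * \<delta>) + \<eta>"
            using A1[of n] A1[of 0] by linarith
          also have "\<dots> = hb s" unfolding hb_def Q_def by (simp add: algebra_simps)
          finally show ?thesis .
        qed
        have "norm (integral {0..t} W) \<le> integral {0..t} hb"
          by (rule integral_norm_bound_integral[OF Wint]) (use hbI bnd in auto)
        also have "integral {0..t} hb = (2*K*\<delta>) * (t + t powr (1-\<alpha>)/(1-\<alpha>)) + \<eta> * t"
          using hbI by (rule integral_unique)
        also have "\<dots> \<le> (2*K*\<delta>) * C0 + \<eta> * T"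
        proof -
          have "t powr (1-\<alpha>) \<le> T powr (1-\<alpha>)" using t' alpha by (intro powr_mono2) auto
          then have "t powr (1-\<alpha>)/(1-\<alpha>) \<le> T powr (1-\<alpha>)/(1-\<alpha>)" using alpha by (intro divide_right_mono) auto
          then have "t + t powr (1-\<alpha>)/(1-\<alpha>) \<le> C0" using t' unfolding C0_def by linarith
          then have "(2*K*\<delta>) * (t + t powr (1-\<alpha>)/(1-\<alpha>)) \<le> (2*K*\<delta>) * C0"
            using K \<delta> by (intro mult_left_mono) auto
          moreover have "\<eta> * t \<le> \<eta> * T" using \<eta> t' by (intro mult_left_mono) auto
          ultimately show ?thesis by linarith
        qed
        also have "\<dots> = e/2 + e/4" unfolding \<delta>_def \<eta>_def using K C0 T by (simp add: field_simps)
        also have "\<dots> < e" using e by simp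
        finally show ?thesis using eqi by (simp add: dist_norm)
      qed
    qed
  qed
  show ?thesis using intpart unif by blast
qed

end
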